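(* Let $Q:\mathbb{R}^n\to\mathcal{Z}$ be a quantizer, $\mathbf{S}\in\mathbb{R}^{n\times m}$, $z\in\mathcal{Z}$, $\mathbf{x}_0,\mathbf{x}_1\in\mathbb{R}^m$, $\boldsymbol{\Psi}_0,\boldsymbol{\Psi}_1\in\mathcal{P}_n$ and $\alpha\in[0,1]$. Set $\mathcal{A}_i:=\mathcal{W}(z,\mathbf{x}_i,\boldsymbol{\Psi}_i)$ for $i\in\{0,1\}$, $\mathbf{x}_\alpha=\alpha\mathbf{x}_1+(1-\alpha)\mathbf{x}_0$, $\boldsymbol{\Psi}_\alpha=\alpha\boldsymbol{\Psi}_1+(1-\alpha)\boldsymbol{\Psi}_0$, and $\mathcal{A}_\alpha:=\{\alpha\mathbf{w}_1+(1-\alpha)\mathbf{w}_0:\mathbf{w}_1\in\mathcal{A}_1,\mathbf{w}_0\in\mathcal{A}_0\}$. Suppose one of the following holds: (a) $Q^{-1}(z)$ is convex and $\boldsymbol{\Psi}_1=\boldsymbol{\Psi}_0$; (b) $Q^{-1}(z)$ is convex and $\boldsymbol{\Psi}_i=\psi_i\mathbf{I}_n$ with $\psi_i>0$ for $i\in\{0,1\}$; (c) $\boldsymbol{\Psi}_0,\boldsymbol{\Psi}_1$ are diagonal with positive diagonal entries and $Q^{-1}(z)=\prod_{j=1}^n[a_j,b_j]$ for some $a_j\le b_j$ in $\mathbb{R}\cup\{-\infty,+\infty\}$ (each factor understood as the corresponding closed interval of $\mathbb{R}$). Then $\mathcal{A}_\alpha\subseteq\mathcal{W}(z,\mathbf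{x}_\alpha,\boldsymbol{\Psi}_\alpha)$.
   Context: $\mathcal{P}_n$ denotes the set of $n\times n$ real symmetric positive-definite matrices; $\mathbf{I}_n$ is the identity. A quantizer is any map $Q:\mathbb{R}^n\to\mathcal{Z}$ with $\mathcal{Z}$ countable. For $z\in\mathcal{Z}$, $\mathbf{x}\in\mathbb{R}^m$, $\boldsymbol{\Psi}\in\mathcal{P}_n$, define $\mathcal{W}(z,\mathbf{x},\boldsymbol{\Psi}):=\{\mathbf{w}\in\mathbb{R}^n:\boldsymbol{\Psi}^{-1}(\mathbf{S}\mathbf{x}+\mathbf{w})\in Q^{-1}(z)\}=\{\boldsymbol{\Psi}\mathbf{y}-\mathbf{S}\mathbf{x}:\mathbf{y}\in Q^{-1}(z)\}$. *)

theory Defs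
  imports "HOL-Analysis.Analysis" "HOL-Library.Extended_Real"
begin

text \<open>Symmetric positive-definite n x n real matrices.\<close>
definition pos_def_mat :: "real^'n^'n \<Rightarrow> bool" where
  "pos_def_mat P \<longleftrightarrow> transpose P = P \<and> (\<forall>v. v \<noteq> 0 \<longrightarrow> v \<bullet> (P *v v) > 0)"

text \<open>W(z,x,Psi) = {w. Psi^{-1}(S x + w) in Q^{-1}(z)}, for quantizer Q and matrix S.\<close>
definition Wset :: "(real^'n \<Rightarrow> 'z) \<Rightarrow> real^'m^'n \<Rightarrow> 'z \<Rightarrow> real^'m \<Rightarrow> real^'n^'n \<Rightarrow> (real^'n) set" where
  "Wset Q S z x P = {w. matrix_inv P *v (S *v x + w) \<in> Q -` {z}}"

end

theory Submission
  imports Defs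
begin

lemma smat: "((c::real) *\<^sub>R (A::real^'n^'m)) *v v = c *\<^sub>R (A *v v)"
  by (simp add: vec_eq_iff matrix_vector_mult_def sum_distrib_left algebra_simps)
lemma sadd: "((A::real^'n^'m) + B) *v v = A *v v + B *v v"
  by (simp add: vec_eq_iff matrix_vector_mult_def sum.distrib algebra_simps)
lemma vscal: "(A::real^'n^'m) *v ((c::real) *\<^sub>R v) = c *\<^sub>R (A *v v)"
  by (simp add: vec_eq_iff matrix_vector_mult_def sum_distrib_left algebra_simps)
lemma vadd: "(A::real^'n^'m) *v (u + v) = A *v u + A *v v"
  by (simp add: vec_eq_iff matrix_vector_mult_def sum.distrib algebra_simps)

lemma pd_inv: assumes "pos_def_mat (P::real^'n^'n)" shows "invertible P"
proof -
  have "\<forall>x. P *v x = 0 \<longrightarrow> x = 0"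
    using assms unfolding pos_def_mat_def by (metis inner_zero_right less_irrefl)
  then show ?thesis using matrix_left_invertible_ker invertible_left_inverse by blast
qed

lemma inv_apply: assumes "invertible (P::real^'n^'n)" shows "matrix_inv P *v (P *v y) = y"
proof -
  have "P ** matrix_inv P = mat 1 \<and> matrix_inv P ** P = mat 1"
    using assms unfolding invertible_def matrix_inv_def by (rule someI_ex)
  then show ?thesis by (simp add: matrix_vector_mul_assoc)
qed

lemma inv_apply2: assumes "invertible (P::real^'n^'n)" shows "P *v (matrix_inv P *v y) = y"
proof -
  have "P ** matrix_inv P = mat 1 \<and> matrix_inv P ** P = mat 1"
    using assms unfolding invertible_def matrix_inv_def by (rule someI_ex)
  then show ?thesis by (simp add: matrix_vector_mul_assoc)
qed

lemma pd_comb: assumes "pos_def_mat P0" "pos_def_mat P1" "0 \<le> (a::real)" "a \<le> 1"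
  shows "pos_def_mat (a *\<^sub>R (P1::real^'n^'n) + (1 - a) *\<^sub>R (P0::real^'n^'n))"   unfolding pos_def_mat_def
proof (intro conjI allI impI)
  show "transpose (a *\<^sub>R P1 + (1 - a) *\<^sub>R P0) = a *\<^sub>R P1 + (1 - a) *\<^sub>R P0"
    using assms unfolding pos_def_mat_def by (simp add: transpose_def vec_eq_iff)
  fix v :: "real^'n" assume v: "v \<noteq> 0"
  have e: "v \<bullet> ((a *\<^sub>R P1 + (1 - a) *\<^sub>R P0) *v v) = a * (v \<bullet> (P1 *v v)) + (1-a) * (v \<bullet> (P0 *v v))"
    by (simp add: sadd smat inner_add_right)
  have "v \<bullet> (P1 *v v) > 0" "v \<bullet> (P0 *v v) > 0" using assms v unfolding pos_def_mat_def by auto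
  then show "0 < v \<bullet> ((a *\<^sub>R P1 + (1 - a) *\<^sub>R P0) *v v)" unfolding e
    using assms by (cases "a = 0") (auto intro: add_pos_nonneg)
qed

lemma diag_apply: assumes "\<forall>i j. i \<noteq> j \<longrightarrow> (P::real^'n^'n) $ i $ j = 0"
  shows "(P *v v) $ j = P $ j $ j * v $ j"
proof -
  have "(P *v v) $ j = (\<Sum>i\<in>UNIV. if i = j then P $ j $ j * v $ j else 0)"
    unfolding matrix_vector_mult_def vec_lambda_beta by (rule sum.cong) (auto simp: assms)
  then show ?thesis by simp
qed

lemma scal_apply: "((c::real) *\<^sub>R (mat 1::real^'n^'n)) *v v = c *\<^sub>R v"
  by (simp add: smat)

lemma ereal_comb: assumes "a \<le> ereal s" "a \<le> ereal t" "ereal s \<le> b" "ereal t \<le> b" "0 \<le> l" "0 \<le> m" "l + m = 1"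
  shows "a \<le> ereal (l * s + m * t) \<and> ereal (l * s+m * t) \<le> b"
proof -
  have "min s t \<le> l * s+m * t"
  proof -
    have "l * min s t + m * min s t \<le> l * s+m * t" using assms by (intro add_mono mult_left_mono) auto
    moreover have "l * min s t + m * min s t = min s t" using assms(7) by (metis distrib_right mult_1)
    ultimately show ?thesis by simp
  qed
  moreover have "l * s+m * t \<le> max s t"
  proof -
    have "l * s+m * t \<le> l * max s t + m * max s t" using assms by (intro add_mono mult_left_mono) auto
    moreover have "l * max s t + m * max s t = max s t" using assms(7) by (metis distrib_right mult_1)
    ultimately show ?thesis by simp
  qed
  moreover have "a \<le> ereal (min s t)" "ereal (max s t) \<le> b" using assms by (auto simp: min_def max_def)
  ultimately show ?thesis by (meson ereal_less_eq(3) order_trans)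
qed

theorem lemma3:
  fixes Q :: "real^'n \<Rightarrow> 'z::countable"
    and S :: "real^'m^'n"
    and z :: 'z
    and x0 x1 :: "real^'m"
    and P0 P1 :: "real^'n^'n"
    and \<alpha> :: real
  assumes P0: "pos_def_mat P0" and P1: "pos_def_mat P1"
    and \<alpha>: "0 \<le> \<alpha>" "\<alpha> \<le> 1"
    and cases:
      "(convex (Q -` {z}) \<and> P1 = P0)
       \<or> (convex (Q -` {z}) \<and> (\<exists>\<psi>0 \<psi>1::real. \<psi>0 > 0 \<and> \<psi>1 > 0 \<and>
            P0 = \<psi>0 *\<^sub>R mat 1 \<and> P1 = \<psi>1 *\<^sub>R mat 1))
       \<or> ((\<forall>i j. i \<noteq> j \<longrightarrow> P0 $ i $ j = 0 \<and> P1 $ i $ j = 0)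
          \<and> (\<forall>i. P0 $ i $ i > 0 \<and> P1 $ i $ i > 0)
          \<and> (\<exists>a b :: 'n \<Rightarrow> ereal. (\<forall>j. a j \<le> b j) \<and>
               Q -` {z} = {y. \<forall>j. a j \<le> ereal (y $ j) \<and> ereal (y $ j) \<le> b j}))"
  shows "{\<alpha> *\<^sub>R w1 + (1 - \<alpha>) *\<^sub>R w0 | w1 w0.
            w1 \<in> Wset Q S z x1 P1 \<and> w0 \<in> Wset Q S z x0 P0}
         \<subseteq> Wset Q S z (\<alpha> *\<^sub>R x1 + (1 - \<alpha>) *\<^sub>R x0) (\<alpha> *\<^sub>R P1 + (1 - \<alpha>) *\<^sub>R P0)"
proof
  define C where "C = Q -` {z}"
  define Pa where "Pa = \<alpha> *\<^sub>R P1 + (1 - \<alpha>) *\<^sub>R P0"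
  have Pa: "invertible Pa" unfolding Pa_def by (rule pd_inv[OF pd_comb[OF P0 P1 \<alpha>]])
  fix u assume "u \<in> {\<alpha> *\<^sub>R w1 + (1 - \<alpha>) *\<^sub>R w0 | w1 w0.
            w1 \<in> Wset Q S z x1 P1 \<and> w0 \<in> Wset Q S z x0 P0}"
  then obtain w1 w0 where u: "u = \<alpha> *\<^sub>R w1 + (1 - \<alpha>) *\<^sub>R w0"
    and w1: "w1 \<in> Wset Q S z x1 P1" and w0: "w0 \<in> Wset Q S z x0 P0" by blast
  define y1 where "y1 = matrix_inv P1 *v (S *v x1 + w1)"
  define y0 where "y0 = matrix_inv P0 *v (S *v x0 + w0)"
  have y1C: "y1 \<in> C" and y0C: "y0 \<in> C" using w1 w0 unfolding y1_def y0_def C_def Wset_def by auto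
  have e1: "S *v x1 + w1 = P1 *v y1" unfolding y1_def using inv_apply2[OF pd_inv[OF P1]] by simp
  have e0: "S *v x0 + w0 = P0 *v y0" unfolding y0_def using inv_apply2[OF pd_inv[OF P0]] by simp
  have eu: "S *v (\<alpha> *\<^sub>R x1 + (1 - \<alpha>) *\<^sub>R x0) + u = \<alpha> *\<^sub>R (P1 *v y1) + (1 - \<alpha>) *\<^sub>R (P0 *v y0)"
    unfolding u e1[symmetric] e0[symmetric]
    by (simp add: sadd smat vadd vscal algebra_simps)
  have "\<exists>y\<in>C. Pa *v y = \<alpha> *\<^sub>R (P1 *v y1) + (1 - \<alpha>) *\<^sub>R (P0 *v y0)"
    using cases unfolding C_def[symmetric]
  proof (elim disjE conjE exE)
    assume cv: "convex C" and eq: "P1 = P0"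
    show ?thesis
    proof (intro bexI)
      show "\<alpha> *\<^sub>R y1 + (1 - \<alpha>) *\<^sub>R y0 \<in> C" using cv y1C y0C \<alpha> by (simp add: convex_def)
      show "Pa *v (\<alpha> *\<^sub>R y1 + (1 - \<alpha>) *\<^sub>R y0) = \<alpha> *\<^sub>R (P1 *v y1) + (1 - \<alpha>) *\<^sub>R (P0 *v y0)"
        unfolding Pa_def eq by (simp add: sadd smat vadd vscal algebra_simps)
    qed
  next
    fix p0 p1 assume cv: "convex C" and p: "0 < p0" "0 < p1" and e0: "P0 = p0 *\<^sub>R mat 1" and e1: "P1 = p1 *\<^sub>R mat 1"
    define pa where "pa = \<alpha> * p1 + (1 - \<alpha>) * p0"
    have pa: "pa > 0" unfolding pa_def using p \<alpha> by (cases "\<alpha> = 0") (auto intro: add_pos_nonneg)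
    have Pae: "Pa = pa *\<^sub>R mat 1" unfolding Pa_def pa_def e0 e1 by (simp add: algebra_simps)
    show ?thesis
    proof (intro bexI)
      show "(\<alpha> * p1 / pa) *\<^sub>R y1 + ((1 - \<alpha>) * p0 / pa) *\<^sub>R y0 \<in> C"
        using cv y1C y0C \<alpha> p pa unfolding convex_def
        by (metis (no_types, lifting) add_divide_distrib divide_nonneg_pos mult_nonneg_nonneg less_imp_le diff_ge_0_iff_ge pa_def divide_self_if less_irrefl)
      show "Pa *v ((\<alpha> * p1 / pa) *\<^sub>R y1 + ((1 - \<alpha>) * p0 / pa) *\<^sub>R y0) = \<alpha> *\<^sub>R (P1 *v y1) + (1 - \<alpha>) *\<^sub>R (P0 *v y0)"
      proof -
        have c1: "pa * (\<alpha> * p1 / pa) = \<alpha> * p1" and c0: "pa * ((1 - \<alpha>) * p0 / pa) = (1 - \<alpha>) * p0"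
          using pa by simp_all
        show ?thesis unfolding Pae e0 e1 scal_apply
          by (simp only: scaleR_add_right scaleR_scaleR c1 c0)
      qed
    qed
  next
    fix a b :: "'n \<Rightarrow> ereal"
    assume off: "\<forall>i j. i \<noteq> j \<longrightarrow> P0 $ i $ j = 0 \<and> P1 $ i $ j = 0"
      and dg: "\<forall>i. P0 $ i $ i > 0 \<and> P1 $ i $ i > 0" and ab: "\<forall>j. a j \<le> b j"
      and Ce: "C = {y. \<forall>j. a j \<le> ereal (y $ j) \<and> ereal (y $ j) \<le> b j}"
    have offa: "\<forall>i j. i \<noteq> j \<longrightarrow> Pa $ i $ j = 0" using off unfolding Pa_def by simp
    define d where "d j = \<alpha> * P1 $ j $ j + (1 - \<alpha>) * P0 $ j $ j" for j
    have d: "d j > 0" for j unfolding d_def using dg[rule_format, of j] \<alpha>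
      by (cases "\<alpha> = 0") (auto intro: add_pos_nonneg)
    define y where "y = (\<chi> j. (\<alpha> * P1 $ j $ j / d j) * y1 $ j + ((1 - \<alpha>) * P0 $ j $ j / d j) * y0 $ j)"
    show ?thesis
    proof (intro bexI)
      show "y \<in> C" unfolding Ce
      proof (intro CollectI allI)
        fix j
        have l: "\<alpha> * P1 $ j $ j / d j + (1 - \<alpha>) * P0 $ j $ j / d j = 1"
          using d[of j] unfolding d_def by (simp add: add_divide_distrib[symmetric])
        show "a j \<le> ereal (y $ j) \<and> ereal (y $ j) \<le> b j"
          unfolding y_def vec_lambda_beta
          apply (rule ereal_comb[OF _ _ _ _ _ _ l])
          using y1C y0C dg[rule_format, of j] d[of j] \<alpha> unfolding Ce by auto
      qed
      show "Pa *v y = \<alpha> *\<^sub>R (P1 *v y1) + (1 - \<alpha>) *\<^sub>R (P0 *v y0)"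
      proof (rule vec_eq_iff[THEN iffD2], rule allI)
        fix j
        have "Pa $ j $ j = d j" unfolding Pa_def d_def by simp
        then show "(Pa *v y) $ j = (\<alpha> *\<^sub>R (P1 *v y1) + (1 - \<alpha>) *\<^sub>R (P0 *v y0)) $ j"
          using diag_apply[OF offa] diag_apply[of P1] diag_apply[of P0] off d[of j]
          unfolding y_def by (simp add: field_simps)
      qed
    qed
  qed
  then obtain y where yC: "y \<in> C" and ye: "Pa *v y = \<alpha> *\<^sub>R (P1 *v y1) + (1 - \<alpha>) *\<^sub>R (P0 *v y0)" by blast
  have "matrix_inv Pa *v (S *v (\<alpha> *\<^sub>R x1 + (1 - \<alpha>) *\<^sub>R x0) + u) = y"
    unfolding eu ye[symmetric] by (rule inv_apply[OF Pa])
  then show "u \<in> Wset Q S z (\<alpha> *\<^sub>R x1 + (1 - \<alpha>) *\<^sub>R x0) (\<alpha> *\<^sub>R P1 + (1 - \<alpha>) *\<^sub>R P0)"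
    using yC unfolding Wset_def C_def Pa_def by simp
qed

end
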